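(* Let $R$ be a commutative ring with unit, $M$ an $R$-module, $\mathbf A$ a $k\times l$ matrix with entries in $R$, and $r\ge1$ an integer. (1) If $S\subseteq R$ is a multiplicative subset containing no zero divisors on $M$ (i.e. $sm=0$ with $s\in S$, $m\in M$ implies $m=0$), then $\mathbf A$ is partition regular over $M$ for $r$ colours if and only if it is partition regular over $S^{-1}M$ for $r$ colours. (2) If $R$ is an integral domain with fraction field $K$, then $\mathbf A$ is partition regular over $R$ for $r$ colours if and only if it is partition regular over $K$ (as an $R$-module) for $r$ colours.
   Context: $\mathbf{A}$ is partition regular over an $R$-module $N$ for $r$ colours if for every map $\chi\colon N\to\{1,\dots,r\}$ there is $\mathbf{n}=(n_1,\dots,n_l)^{\intercal}\in N^l$ with $\mathbf{A}\mathbf{n}=0$, $\mathbf{n}\neq 0$ and $\chi(n_1)=\dots=\chi(n_l)$. *)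

theory Defs
  imports Main "HOL.Modules" "HOL-Computational_Algebra.Fraction_Field"
begin

text \<open>An R-module is given abstractly by a carrier set N, a zero, an addition and a
  scalar multiplication.\<close>

definition lincomb :: "('e \<Rightarrow> 'e \<Rightarrow> 'e) \<Rightarrow> 'e \<Rightarrow> ('r \<Rightarrow> 'e \<Rightarrow> 'e)
    \<Rightarrow> (nat \<Rightarrow> nat \<Rightarrow> 'r) \<Rightarrow> nat \<Rightarrow> (nat \<Rightarrow> 'e) \<Rightarrow> nat \<Rightarrow> 'e" where
  "lincomb add z sc A i n l = foldr (\<lambda>j acc. add (sc (A i j) (n j)) acc) [0..<l] z"

definition partition_regular ::
  "'e set \<Rightarrow> 'e \<Rightarrow> ('e \<Rightarrow> 'e \<Rightarrow> 'e) \<Rightarrow> ('r \<Rightarrow> 'e \<Rightarrow> 'e)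
    \<Rightarrow> (nat \<Rightarrow> nat \<Rightarrow> 'r) \<Rightarrow> nat \<Rightarrow> nat \<Rightarrow> nat \<Rightarrow> bool" where
  "partition_regular N z add sc A k l r \<longleftrightarrow>
     (\<forall>\<chi> :: 'e \<Rightarrow> nat. \<chi> ` N \<subseteq> {1..r} \<longrightarrow>
        (\<exists>n :: nat \<Rightarrow> 'e. (\<forall>j<l. n j \<in> N)
            \<and> (\<forall>i<k. lincomb add z sc A i n l = z)
            \<and> (\<exists>j<l. n j \<noteq> z)
            \<and> (\<exists>c. \<forall>j<l. \<chi> (n j) = c)))"

definition mult_subset :: "'r::comm_ring_1 set \<Rightarrow> bool" where
  "mult_subset S \<longleftrightarrow> 1 \<in> S \<and> (\<forall>s\<in>S. \<forall>t\<in>S. s * t \<in> S)"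

text \<open>Localization S^{-1}M of a module M (the whole type 'm with scalar multiplication
  scale) at a multiplicative subset S: classes of pairs (m, s), s in S, under
  (m,s) ~ (m',s') iff t (s' m - s m') = 0 for some t in S.\<close>

definition loc_rel :: "('r::comm_ring_1 \<Rightarrow> 'm::ab_group_add \<Rightarrow> 'm) \<Rightarrow> 'r set
    \<Rightarrow> (('m \<times> 'r) \<times> ('m \<times> 'r)) set" where
  "loc_rel scale S = {((m, s), (m', s')). s \<in> S \<and> s' \<in> S \<and>
      (\<exists>t\<in>S. scale t (scale s' m - scale s m') = 0)}"

definition loc_class :: "('r::comm_ring_1 \<Rightarrow> 'm::ab_group_add \<Rightarrow> 'm) \<Rightarrow> 'r set
    \<Rightarrow> 'm \<Rightarrow> 'r \<Rightarrow> ('m \<times> 'r) set" where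
  "loc_class scale S m s = loc_rel scale S `` {(m, s)}"

definition loc_carrier :: "('r::comm_ring_1 \<Rightarrow> 'm::ab_group_add \<Rightarrow> 'm) \<Rightarrow> 'r set
    \<Rightarrow> ('m \<times> 'r) set set" where
  "loc_carrier scale S = {loc_class scale S m s | m s. s \<in> S}"

definition loc_zero :: "('r::comm_ring_1 \<Rightarrow> 'm::ab_group_add \<Rightarrow> 'm) \<Rightarrow> 'r set
    \<Rightarrow> ('m \<times> 'r) set" where
  "loc_zero scale S = loc_class scale S 0 1"

definition loc_add :: "('r::comm_ring_1 \<Rightarrow> 'm::ab_group_add \<Rightarrow> 'm) \<Rightarrow> 'r set
    \<Rightarrow> ('m \<times> 'r) set \<Rightarrow> ('m \<times> 'r) set \<Rightarrow> ('m \<times> 'r) set" where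
  "loc_add scale S X Y =
     (let (m, s) = (SOME p. p \<in> X); (m', s') = (SOME p. p \<in> Y)
      in loc_class scale S (scale s' m + scale s m') (s * s'))"

definition loc_scale :: "('r::comm_ring_1 \<Rightarrow> 'm::ab_group_add \<Rightarrow> 'm) \<Rightarrow> 'r set
    \<Rightarrow> 'r \<Rightarrow> ('m \<times> 'r) set \<Rightarrow> ('m \<times> 'r) set" where
  "loc_scale scale S a X = (let (m, s) = (SOME p. p \<in> X) in loc_class scale S (scale a m) s)"

end

theory Submission imports Defs begin

definition ufam :: "'a set set \<Rightarrow> 'a set set \<Rightarrow> bool" where
  "ufam B F \<longleftrightarrow> B \<subseteq> F \<and> (\<forall>X\<in>F. \<forall>Y. X \<subseteq> Y \<longrightarrow> Y \<in> F) \<and> (\<forall>X\<in>F. \<forall>Y\<in>F. X \<inter> Y \<in> F) \<and> {} \<notin> F"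

lemma ufamD:
  assumes "ufam B F"
  shows "B \<subseteq> F" "\<And>X Y. X \<in> F \<Longrightarrow> X \<subseteq> Y \<Longrightarrow> Y \<in> F" "\<And>X Y. X \<in> F \<Longrightarrow> Y \<in> F \<Longrightarrow> X \<inter> Y \<in> F" "{} \<notin> F"
  using assms unfolding ufam_def by auto

lemma ufamI:
  assumes "B \<subseteq> F" "\<And>X Y. X \<in> F \<Longrightarrow> X \<subseteq> Y \<Longrightarrow> Y \<in> F" "\<And>X Y. X \<in> F \<Longrightarrow> Y \<in> F \<Longrightarrow> X \<inter> Y \<in> F" "{} \<notin> F"
  shows "ufam B F"
  using assms unfolding ufam_def by auto

lemma ultra_exists:
  assumes B: "ufam B B" and Bne: "B \<noteq> {}"
  shows "\<exists>U. ufam B U \<and> (\<forall>P. P \<in> U \<or> - P \<in> U)"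
proof -
  let ?A = "{F. ufam B F}"
  have "\<exists>M\<in>?A. \<forall>X\<in>?A. M \<subseteq> X \<longrightarrow> X = M"
  proof (rule Zorn_Lemma2, intro ballI)
    fix C assume C: "C \<in> chains ?A"
    show "\<exists>U\<in>?A. \<forall>X\<in>C. X \<subseteq> U"
    proof (cases "C = {}")
      case True then show ?thesis using B by auto
    next
      case False
      have CA: "\<And>F. F \<in> C \<Longrightarrow> ufam B F" using C by (auto simp: chains_def)
      have ch: "\<And>F G. F \<in> C \<Longrightarrow> G \<in> C \<Longrightarrow> F \<subseteq> G \<or> G \<subseteq> F"
        using C by (auto simp: chains_def chain_subset_def)
      have "ufam B (\<Union>C)"
      proof (rule ufamI)
        obtain F where F: "F \<in> C" using False by auto
        have "B \<subseteq> F" using ufamD(1)[OF CA[OF F]] .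
        then show "B \<subseteq> \<Union>C" using F by auto
      next
        fix X Y assume "X \<in> \<Union>C" "X \<subseteq> Y"
        then obtain F where F: "F \<in> C" "X \<in> F" by auto
        then have "Y \<in> F" using ufamD(2)[OF CA[OF F(1)]] \<open>X \<subseteq> Y\<close> by auto
        then show "Y \<in> \<Union>C" using F by auto
      next
        fix X Y assume X: "X \<in> \<Union>C" and Y: "Y \<in> \<Union>C"
        then obtain F G where FG: "F \<in> C" "G \<in> C" "X \<in> F" "Y \<in> G" by auto
        show "X \<inter> Y \<in> \<Union>C"
        proof (cases "F \<subseteq> G")
          case True
          then have "X \<inter> Y \<in> G" using ufamD(3)[OF CA[OF FG(2)]] FG by auto
          then show ?thesis using FG by auto
        next
          case False
          then have "G \<subseteq> F" using ch FG by auto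
          then have "X \<inter> Y \<in> F" using ufamD(3)[OF CA[OF FG(1)]] FG by auto
          then show ?thesis using FG by auto
        qed
      next
        show "{} \<notin> \<Union>C" using CA ufamD(4) by auto
      qed
      then show ?thesis by auto
    qed
  qed
  then obtain M where M: "ufam B M" and max: "\<And>X. ufam B X \<Longrightarrow> M \<subseteq> X \<Longrightarrow> X = M" by auto
  have "P \<in> M \<or> - P \<in> M" for P
  proof (rule ccontr)
    assume nP: "\<not> (P \<in> M \<or> - P \<in> M)"
    have disj: "Y \<inter> P \<noteq> {}" if "Y \<in> M" for Y
    proof
      assume "Y \<inter> P = {}" then have "Y \<subseteq> - P" by auto
      then have "- P \<in> M" using ufamD(2)[OF M] that by auto
      then show False using nP by auto
    qed
    let ?M' = "{X. \<exists>Y\<in>M. Y \<inter> P \<subseteq> X}"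
    have "ufam B ?M'"
    proof (rule ufamI)
      show "B \<subseteq> ?M'" using ufamD(1)[OF M] by auto
    next
      fix X Y assume "X \<in> ?M'" "X \<subseteq> Y" then show "Y \<in> ?M'" by auto
    next
      fix X Y assume "X \<in> ?M'" "Y \<in> ?M'"
      then obtain X' Y' where XY: "X' \<in> M" "Y' \<in> M" "X' \<inter> P \<subseteq> X" "Y' \<inter> P \<subseteq> Y" by auto
      moreover have "X' \<inter> Y' \<in> M" using ufamD(3)[OF M] XY by auto
      moreover have "(X' \<inter> Y') \<inter> P \<subseteq> X \<inter> Y" using XY by auto
      ultimately show "X \<inter> Y \<in> ?M'" by auto
    next
      show "{} \<notin> ?M'" using disj by auto
    qed
    moreover have "M \<subseteq> ?M'" by auto
    ultimately have eq: "?M' = M" using max by auto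
    obtain Y where "Y \<in> B" using Bne by auto
    then have "Y \<in> M" using ufamD(1)[OF M] by auto
    then have "P \<in> ?M'" by auto
    then show False using nP eq by auto
  qed
  then show ?thesis using M by auto
qed


lemma foldr_hom:
  assumes addC: "\<And>a b. a \<in> C \<Longrightarrow> b \<in> C \<Longrightarrow> add a b \<in> C"
    and scC: "\<And>a x. x \<in> C \<Longrightarrow> sc a x \<in> C"
    and fadd: "\<And>a b. a \<in> C \<Longrightarrow> b \<in> C \<Longrightarrow> f (add a b) = add' (f a) (f b)"
    and fsc: "\<And>a x. x \<in> C \<Longrightarrow> f (sc a x) = sc' a (f x)"
  shows "set xs \<subseteq> {j. n j \<in> C} \<Longrightarrow> acc \<in> C \<Longrightarrow>
    foldr (\<lambda>j acc. add (sc (A i j) (n j)) acc) xs acc \<in> C \<and>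
    f (foldr (\<lambda>j acc. add (sc (A i j) (n j)) acc) xs acc) =
      foldr (\<lambda>j acc. add' (sc' (A i j) (f (n j))) acc) xs (f acc)"
proof (induction xs)
  case Nil then show ?case by simp
next
  case (Cons x xs)
  then have IH: "foldr (\<lambda>j acc. add (sc (A i j) (n j)) acc) xs acc \<in> C"
    "f (foldr (\<lambda>j acc. add (sc (A i j) (n j)) acc) xs acc) =
      foldr (\<lambda>j acc. add' (sc' (A i j) (f (n j))) acc) xs (f acc)" by auto
  have nx: "n x \<in> C" using Cons.prems by auto
  show ?case using IH nx by (simp add: addC scC fadd fsc)
qed

lemma lincomb_hom:
  assumes addC: "\<And>a b. a \<in> C \<Longrightarrow> b \<in> C \<Longrightarrow> add a b \<in> C"
    and scC: "\<And>a x. x \<in> C \<Longrightarrow> sc a x \<in> C"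
    and fadd: "\<And>a b. a \<in> C \<Longrightarrow> b \<in> C \<Longrightarrow> f (add a b) = add' (f a) (f b)"
    and fsc: "\<And>a x. x \<in> C \<Longrightarrow> f (sc a x) = sc' a (f x)"
    and zC: "z \<in> C" and fz: "f z = z'"
    and nC: "\<forall>j<l. n j \<in> C"
  shows "lincomb add z sc A i n l \<in> C \<and>
    f (lincomb add z sc A i n l) = lincomb add' z' sc' A i (\<lambda>j. f (n j)) l"
proof -
  have "set [0..<l] \<subseteq> {j. n j \<in> C}" using nC by auto
  then show ?thesis
    using foldr_hom[of C add sc f add' sc' "[0..<l]" n z A i, OF addC scC fadd fsc] zC fz
    unfolding lincomb_def by auto
qed

definition cone :: "'r::comm_ring_1 set \<Rightarrow> 'r set set" where
  "cone S = {X. \<exists>s0\<in>S. {s0 * t |t. t \<in> S} \<subseteq> X}"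

lemma cone_ufam:
  assumes "mult_subset S" shows "ufam (cone S) (cone S)" "cone S \<noteq> {}"
proof -
  have S1: "1 \<in> S" and Sm: "\<And>s t. s \<in> S \<Longrightarrow> t \<in> S \<Longrightarrow> s * t \<in> S"
    using assms unfolding mult_subset_def by auto
  show "ufam (cone S) (cone S)"
  proof (rule ufamI)
    fix X Y assume "X \<in> cone S" "X \<subseteq> Y" then show "Y \<in> cone S" unfolding cone_def by blast
  next
    fix X Y assume "X \<in> cone S" "Y \<in> cone S"
    then obtain s0 s1 where s: "s0 \<in> S" "s1 \<in> S" "{s0 * t |t. t \<in> S} \<subseteq> X" "{s1 * t |t. t \<in> S} \<subseteq> Y"
      unfolding cone_def by blast
    have "{s0 * s1 * t |t. t \<in> S} \<subseteq> X \<inter> Y"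
    proof
      fix x assume "x \<in> {s0 * s1 * t |t. t \<in> S}"
      then obtain t where t: "t \<in> S" "x = s0 * s1 * t" by auto
      have "x = s0 * (s1 * t)" "x = s1 * (s0 * t)" using t by (simp_all add: ac_simps)
      moreover have "s1 * t \<in> S" "s0 * t \<in> S" using t s Sm by auto
      ultimately show "x \<in> X \<inter> Y" using s by blast
    qed
    then show "X \<inter> Y \<in> cone S" using s Sm unfolding cone_def by blast
  next
    show "{} \<notin> cone S"
    proof
      assume "{} \<in> cone S"
      then obtain s0 where "s0 \<in> S" "{s0 * t |t. t \<in> S} \<subseteq> {}" unfolding cone_def by blast
      then show False using S1 by blast
    qed
  qed simp
  show "cone S \<noteq> {}" using S1 unfolding cone_def by blast
qed

lemma ultra_fin:
  assumes U: "ufam B U" and ult: "\<forall>P. P \<in> U \<or> - P \<in> U" and fin: "finite I"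
  shows "{s. \<exists>c\<in>I. P c s} \<in> U \<Longrightarrow> \<exists>c\<in>I. {s. P c s} \<in> U"
  using fin
proof (induction I rule: finite_induct)
  case empty then show ?case using ufamD(4)[OF U] by simp
next
  case (insert c I)
  show ?case
  proof (cases "{s. P c s} \<in> U")
    case True then show ?thesis by auto
  next
    case False
    then have "- {s. P c s} \<in> U" using ult by auto
    then have "- {s. P c s} \<inter> {s. \<exists>c'\<in>insert c I. P c' s} \<in> U" using ufamD(3)[OF U] insert.prems by auto
    moreover have "- {s. P c s} \<inter> {s. \<exists>c'\<in>insert c I. P c' s} \<subseteq> {s. \<exists>c\<in>I. P c s}" by auto
    ultimately have "{s. \<exists>c\<in>I. P c s} \<in> U" using ufamD(2)[OF U] by blast
    then show ?thesis using insert.IH by auto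
  qed
qed

lemma ultra_all:
  assumes U: "ufam B U" and "\<forall>j<l. Q j \<in> U" and "(l::nat) > 0"
  shows "(\<Inter>j<l. Q j) \<in> U"
  using assms(2,3)
proof (induction l)
  case 0 then show ?case by simp
next
  case (Suc l)
  show ?case
  proof (cases "l = 0")
    case True then show ?thesis using Suc.prems by (simp add: lessThan_Suc)
  next
    case False
    then have "(\<Inter>j<l. Q j) \<in> U" using Suc by auto
    moreover have "Q l \<in> U" using Suc.prems by auto
    moreover have "(\<Inter>j<Suc l. Q j) = (\<Inter>j<l. Q j) \<inter> Q l" by (auto simp: lessThan_Suc)
    ultimately show ?thesis using ufamD(3)[OF U] by auto
  qed
qed

lemma lincomb_cong:
  assumes "\<forall>j<l. n j = n' j"
  shows "lincomb add z sc A i n l = lincomb add z sc A i n' l"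
  unfolding lincomb_def using assms by (intro foldr_cong) auto

lemma pr_transfer:
  fixes scale :: "'r::comm_ring_1 \<Rightarrow> 'm::ab_group_add \<Rightarrow> 'm" and NC :: "'e set"
    and \<phi> :: "'m \<Rightarrow> 'e"
  assumes mS: "mult_subset S"
    and padd: "\<And>a b. \<phi> (a + b) = add (\<phi> a) (\<phi> b)"
    and psc: "\<And>a x. \<phi> (scale a x) = sc a (\<phi> x)"
    and p0: "\<phi> 0 = z"
    and addC: "\<And>a b. a \<in> NC \<Longrightarrow> b \<in> NC \<Longrightarrow> add a b \<in> NC"
    and scC: "\<And>a x. x \<in> NC \<Longrightarrow> sc a x \<in> NC"
    and zC: "z \<in> NC"
    and phiC: "\<And>m. \<phi> m \<in> NC"
    and phi_z: "\<And>m. \<phi> m = z \<longleftrightarrow> m = 0"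
    and den: "\<And>x. x \<in> NC \<Longrightarrow> \<exists>s0\<in>S. \<forall>t\<in>S. sc (s0 * t) x \<in> range \<phi>"
    and sadd: "\<And>s a b. s \<in> S \<Longrightarrow> a \<in> NC \<Longrightarrow> b \<in> NC \<Longrightarrow> sc s (add a b) = add (sc s a) (sc s b)"
    and ssc: "\<And>s a x. s \<in> S \<Longrightarrow> x \<in> NC \<Longrightarrow> sc s (sc a x) = sc a (sc s x)"
    and sz: "\<And>s. s \<in> S \<Longrightarrow> sc s z = z"
    and sinj: "\<And>s x. s \<in> S \<Longrightarrow> x \<in> NC \<Longrightarrow> sc s x = z \<Longrightarrow> x = z"
  shows "partition_regular UNIV 0 (+) scale A k l r \<longleftrightarrow> partition_regular NC z add sc A k l r"
proof
  have phlin: "\<phi> (lincomb (+) 0 scale A i n l) = lincomb add z sc A i (\<lambda>j. \<phi> (n j)) l" for i n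
    using lincomb_hom[of UNIV "(+)" scale \<phi> add sc 0 z l n A i] padd psc p0 by auto
  {
    assume PR: "partition_regular UNIV 0 (+) scale A k l r"
    show "partition_regular NC z add sc A k l r"
      unfolding partition_regular_def
    proof (intro allI impI)
      fix \<chi> :: "'e \<Rightarrow> nat" assume \<chi>: "\<chi> ` NC \<subseteq> {1..r}"
      have "(\<lambda>m. \<chi> (\<phi> m)) ` UNIV \<subseteq> {1..r}" using \<chi> phiC by auto
      then have "\<exists>n. (\<forall>j<l. n j \<in> UNIV) \<and> (\<forall>i<k. lincomb (+) 0 scale A i n l = 0) \<and>
        (\<exists>j<l. n j \<noteq> 0) \<and> (\<exists>c. \<forall>j<l. \<chi> (\<phi> (n j)) = c)"
        using PR unfolding partition_regular_def by (elim allE[of _ "\<lambda>m. \<chi> (\<phi> m)"]) simp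
      then obtain n c where n: "\<forall>i<k. lincomb (+) 0 scale A i n l = 0" "\<exists>j<l. n j \<noteq> 0"
        "\<forall>j<l. \<chi> (\<phi> (n j)) = c" by blast
      have "\<forall>i<k. lincomb add z sc A i (\<lambda>j. \<phi> (n j)) l = z"
        using n(1) p0 by (simp add: phlin[symmetric])
      moreover have "\<exists>j<l. \<phi> (n j) \<noteq> z" using n(2) phi_z by auto
      ultimately show "\<exists>n. (\<forall>j<l. n j \<in> NC) \<and> (\<forall>i<k. lincomb add z sc A i n l = z) \<and>
          (\<exists>j<l. n j \<noteq> z) \<and> (\<exists>c. \<forall>j<l. \<chi> (n j) = c)"
        using phiC n(3) by (intro exI[of _ "\<lambda>j. \<phi> (n j)"]) auto
    qed
  }
  {
    assume PR: "partition_regular NC z add sc A k l r"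
    show "partition_regular UNIV 0 (+) scale A k l r"
      unfolding partition_regular_def
    proof (intro allI impI)
      fix \<chi> :: "'m \<Rightarrow> nat" assume \<chi>: "\<chi> ` UNIV \<subseteq> {1..r}"
      obtain U where U: "ufam (cone S) U" and ult: "\<forall>P. P \<in> U \<or> - P \<in> U"
        using ultra_exists[OF cone_ufam(1)[OF mS] cone_ufam(2)[OF mS]] by auto
      define Q where "Q x c = {s. s \<in> S \<and> sc s x \<in> range \<phi> \<and> \<chi> (inv \<phi> (sc s x)) = c}" for x c
      define \<chi>' where "\<chi>' x = (SOME c. c \<in> {1..r} \<and> Q x c \<in> U)" for x
      have ex: "\<exists>c. c \<in> {1..r} \<and> Q x c \<in> U" if x: "x \<in> NC" for x
      proof -
        obtain s0 where s0: "s0 \<in> S" "\<forall>t\<in>S. sc (s0 * t) x \<in> range \<phi>" using den[OF x] by blast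
        have "{s0 * t |t. t \<in> S} \<subseteq> {s. \<exists>c\<in>{1..r}. s \<in> Q x c}"
        proof
          fix s assume "s \<in> {s0 * t |t. t \<in> S}"
          then obtain t where t: "t \<in> S" "s = s0 * t" by auto
          have "s \<in> S" using t s0 mS unfolding mult_subset_def by auto
          moreover have "sc s x \<in> range \<phi>" using s0 t by auto
          moreover have "\<chi> (inv \<phi> (sc s x)) \<in> {1..r}" using \<chi> by (simp add: image_subset_iff)
          ultimately show "s \<in> {s. \<exists>c\<in>{1..r}. s \<in> Q x c}" unfolding Q_def by auto
        qed
        then have "{s. \<exists>c\<in>{1..r}. s \<in> Q x c} \<in> cone S" using s0 unfolding cone_def by blast
        then have "{s. \<exists>c\<in>{1..r}. s \<in> Q x c} \<in> U" using ufamD(1)[OF U] by auto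
        then have "\<exists>c\<in>{1..r}. {s. s \<in> Q x c} \<in> U"
          using ultra_fin[OF U ult, of "{1..r}" "\<lambda>c s. s \<in> Q x c"] by auto
        then show ?thesis by auto
      qed
      have \<chi>'P: "\<chi>' x \<in> {1..r} \<and> Q x (\<chi>' x) \<in> U" if "x \<in> NC" for x
        unfolding \<chi>'_def using someI_ex[OF ex[OF that]] .
      then have "\<chi>' ` NC \<subseteq> {1..r}" by auto
      then have "\<exists>n. (\<forall>j<l. n j \<in> NC) \<and> (\<forall>i<k. lincomb add z sc A i n l = z) \<and>
        (\<exists>j<l. n j \<noteq> z) \<and> (\<exists>c. \<forall>j<l. \<chi>' (n j) = c)"
        using PR unfolding partition_regular_def by (elim allE[of _ \<chi>']) simp
      then obtain n c where n: "\<forall>j<l. n j \<in> NC" "\<forall>i<k. lincomb add z sc A i n l = z"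
        "\<exists>j<l. n j \<noteq> z" "\<forall>j<l. \<chi>' (n j) = c" by blast
      obtain j0 where j0: "j0 < l" "n j0 \<noteq> z" using n(3) by auto
      have "\<forall>j<l. Q (n j) c \<in> U"
      proof (intro allI impI)
        fix j assume "j < l"
        then have "Q (n j) (\<chi>' (n j)) \<in> U" "\<chi>' (n j) = c" using \<chi>'P n(1) n(4) by auto
        then show "Q (n j) c \<in> U" by simp
      qed
      then have "(\<Inter>j<l. Q (n j) c) \<in> U" using ultra_all[OF U, of l "\<lambda>j. Q (n j) c"] j0 by auto
      then have "(\<Inter>j<l. Q (n j) c) \<noteq> {}" using ufamD(4)[OF U] by force
      then obtain s where s: "\<forall>j<l. s \<in> Q (n j) c" by auto
      have sS: "s \<in> S" using s j0 unfolding Q_def by auto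
      define m where "m j = inv \<phi> (sc s (n j))" for j
      have pm: "\<forall>j<l. \<phi> (m j) = sc s (n j)" using s unfolding m_def Q_def by (auto intro: f_inv_into_f)
      have "lincomb (+) 0 scale A i m l = 0" if i: "i < k" for i
      proof -
        have "\<phi> (lincomb (+) 0 scale A i m l) = lincomb add z sc A i (\<lambda>j. \<phi> (m j)) l" by (rule phlin)
        also have "\<dots> = lincomb add z sc A i (\<lambda>j. sc s (n j)) l" using pm by (intro lincomb_cong) auto
        also have "\<dots> = sc s (lincomb add z sc A i n l)"
          using lincomb_hom[of NC add sc "sc s" add sc z z l n A i] addC scC sadd[OF sS] ssc[OF sS] zC sz[OF sS] n(1)
          by auto
        also have "\<dots> = z" using n(2) i sz[OF sS] by auto
        finally show ?thesis using phi_z by auto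
      qed
      moreover have "m j0 \<noteq> 0"
      proof
        assume "m j0 = 0"
        then have "\<phi> (m j0) = z" using p0 by simp
        then have "sc s (n j0) = z" using pm j0 by simp
        then show False using sinj[OF sS] n(1) j0 by auto
      qed
      moreover have "\<forall>j<l. \<chi> (m j) = c" using s unfolding m_def Q_def by auto
      ultimately show "\<exists>n. (\<forall>j<l. n j \<in> UNIV) \<and> (\<forall>i<k. lincomb (+) 0 scale A i n l = 0) \<and>
          (\<exists>j<l. n j \<noteq> 0) \<and> (\<exists>c. \<forall>j<l. \<chi> (n j) = c)"
        using j0 by (intro exI[of _ m]) auto
    qed
  }
qed

locale locm = module scale for scale :: "'r::comm_ring_1 \<Rightarrow> 'm::ab_group_add \<Rightarrow> 'm" +
  fixes S :: "'r set"
  assumes mS: "mult_subset S" and nzd: "\<And>s m. s \<in> S \<Longrightarrow> scale s m = 0 \<Longrightarrow> m = 0"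
begin

lemma S1: "1 \<in> S" and Sm: "s \<in> S \<Longrightarrow> t \<in> S \<Longrightarrow> s * t \<in> S"
  using mS unfolding mult_subset_def by auto

lemma comm: "scale a (scale b m) = scale b (scale a m)"
  by (simp add: mult.commute)

lemma cancel: "s \<in> S \<Longrightarrow> scale s x = scale s y \<Longrightarrow> x = y"
  using nzd[of s "x - y"] by (simp add: scale_right_diff_distrib)

lemma rel_iff: "((m, s), (m', s')) \<in> loc_rel scale S \<longleftrightarrow> s \<in> S \<and> s' \<in> S \<and> scale s' m = scale s m'"
proof
  assume "((m, s), (m', s')) \<in> loc_rel scale S"
  then obtain t where st: "s \<in> S" "s' \<in> S" "t \<in> S" and e: "scale t (scale s' m - scale s m') = 0"
    unfolding loc_rel_def by auto
  have "scale s' m - scale s m' = 0" using nzd[OF st(3) e] .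
  then show "s \<in> S \<and> s' \<in> S \<and> scale s' m = scale s m'" using st by simp
next
  assume a: "s \<in> S \<and> s' \<in> S \<and> scale s' m = scale s m'"
  then have "scale 1 (scale s' m - scale s m') = 0" by simp
  then show "((m, s), (m', s')) \<in> loc_rel scale S" unfolding loc_rel_def using S1 a by blast
qed

lemma mem_cls: "(m', s') \<in> loc_class scale S m s \<longleftrightarrow> s \<in> S \<and> s' \<in> S \<and> scale s' m = scale s m'"
  unfolding loc_class_def using rel_iff by auto

lemma cls_eq:
  assumes "s \<in> S" "s' \<in> S"
  shows "loc_class scale S m s = loc_class scale S m' s' \<longleftrightarrow> scale s' m = scale s m'"
proof
  assume "loc_class scale S m s = loc_class scale S m' s'"
  moreover have "(m', s') \<in> loc_class scale S m' s'" using mem_cls assms by auto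
  ultimately have "(m', s') \<in> loc_class scale S m s" by simp
  then show "scale s' m = scale s m'" using mem_cls by blast
next
  assume e: "scale s' m = scale s m'"
  have "(a, b) \<in> loc_class scale S m s \<longleftrightarrow> (a, b) \<in> loc_class scale S m' s'" for a b
  proof -
    have "scale b m = scale s a \<longleftrightarrow> scale b m' = scale s' a" if "b \<in> S"
    proof -
      have 1: "scale s' (scale b m) = scale s (scale b m')"
      proof -
        have "scale s' (scale b m) = scale b (scale s' m)" by (rule comm)
        also have "\<dots> = scale b (scale s m')" using e by simp
        also have "\<dots> = scale s (scale b m')" by (rule comm)
        finally show ?thesis .
      qed
      have 2: "scale s' (scale s a) = scale s (scale s' a)" by (rule comm)
      have "scale b m = scale s a \<longleftrightarrow> scale s' (scale b m) = scale s' (scale s a)"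
        by (auto simp del: scale_scale dest: cancel[OF assms(2)])
      also have "\<dots> \<longleftrightarrow> scale s (scale b m') = scale s (scale s' a)"
        by (simp only: 1 2)
      also have "\<dots> \<longleftrightarrow> scale b m' = scale s' a" by (auto simp del: scale_scale dest: cancel[OF assms(1)])
      finally show ?thesis .
    qed
    then show ?thesis using mem_cls assms by auto
  qed
  then show "loc_class scale S m s = loc_class scale S m' s'" by auto
qed

lemma some_rep:
  assumes "s \<in> S" "(SOME p. p \<in> loc_class scale S m s) = (m1, s1)"
  shows "s1 \<in> S \<and> loc_class scale S m s = loc_class scale S m1 s1"
proof -
  have "(m, s) \<in> loc_class scale S m s" using mem_cls assms by auto
  then have "(SOME p. p \<in> loc_class scale S m s) \<in> loc_class scale S m s" by (rule someI)
  then have "(m1, s1) \<in> loc_class scale S m s" using assms by simp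
  then show ?thesis using mem_cls cls_eq assms by auto
qed

lemma add_cls:
  assumes s: "s \<in> S" "s' \<in> S"
  shows "loc_add scale S (loc_class scale S m s) (loc_class scale S m' s') =
    loc_class scale S (scale s' m + scale s m') (s * s')"
proof -
  obtain m1 s1 where r1: "(SOME p. p \<in> loc_class scale S m s) = (m1, s1)" by (cases "SOME p. p \<in> loc_class scale S m s")
  obtain m2 s2 where r2: "(SOME p. p \<in> loc_class scale S m' s') = (m2, s2)" by (cases "SOME p. p \<in> loc_class scale S m' s'")
  from some_rep[OF s(1) r1] have s1: "s1 \<in> S" and e1: "scale s1 m = scale s m1" using cls_eq s by auto
  from some_rep[OF s(2) r2] have s2: "s2 \<in> S" and e2: "scale s2 m' = scale s' m2" using cls_eq s by auto
  have "loc_add scale S (loc_class scale S m s) (loc_class scale S m' s') =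
     loc_class scale S (scale s2 m1 + scale s1 m2) (s1 * s2)"
    unfolding loc_add_def using r1 r2 by simp
  also have "\<dots> = loc_class scale S (scale s' m + scale s m') (s * s')"
  proof (subst cls_eq)
    show "s1 * s2 \<in> S" "s * s' \<in> S" using s s1 s2 Sm by auto
    have a: "scale (s * s') (scale s2 m1) = scale (s1 * s2) (scale s' m)"
    proof -
      have "scale (s * s') (scale s2 m1) = scale (s' * s2) (scale s m1)" by (simp add: ac_simps)
      also have "\<dots> = scale (s' * s2) (scale s1 m)" using e1 by simp
      also have "\<dots> = scale (s1 * s2) (scale s' m)" by (simp add: ac_simps)
      finally show ?thesis .
    qed
    have b: "scale (s * s') (scale s1 m2) = scale (s1 * s2) (scale s m')"
    proof -
      have "scale (s * s') (scale s1 m2) = scale (s * s1) (scale s' m2)" by (simp add: ac_simps)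
      also have "\<dots> = scale (s * s1) (scale s2 m')" using e2 by simp
      also have "\<dots> = scale (s1 * s2) (scale s m')" by (simp add: ac_simps)
      finally show ?thesis .
    qed
    show "scale (s * s') (scale s2 m1 + scale s1 m2) = scale (s1 * s2) (scale s' m + scale s m')"
      using a b by (simp add: scale_right_distrib)
  qed
  finally show ?thesis .
qed

lemma scale_cls:
  assumes s: "s \<in> S"
  shows "loc_scale scale S a (loc_class scale S m s) = loc_class scale S (scale a m) s"
proof -
  obtain m1 s1 where r1: "(SOME p. p \<in> loc_class scale S m s) = (m1, s1)" by (cases "SOME p. p \<in> loc_class scale S m s")
  from some_rep[OF s r1] have s1: "s1 \<in> S" and e1: "scale s1 m = scale s m1" using cls_eq s by auto
  have "loc_scale scale S a (loc_class scale S m s) = loc_class scale S (scale a m1) s1"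
    unfolding loc_scale_def using r1 by simp
  also have "\<dots> = loc_class scale S (scale a m) s"
  proof (subst cls_eq[OF s1 s])
    have "scale s (scale a m1) = scale a (scale s m1)" by (rule comm)
    also have "\<dots> = scale a (scale s1 m)" using e1 by simp
    also have "\<dots> = scale s1 (scale a m)" by (rule comm)
    finally show "scale s (scale a m1) = scale s1 (scale a m)" .
  qed
  finally show ?thesis .
qed

lemma carrier_E: "X \<in> loc_carrier scale S \<Longrightarrow> \<exists>m s. s \<in> S \<and> X = loc_class scale S m s"
  unfolding loc_carrier_def by auto

lemma carrier_I: "s \<in> S \<Longrightarrow> loc_class scale S m s \<in> loc_carrier scale S"
  unfolding loc_carrier_def by auto

theorem main:
  "partition_regular UNIV 0 (+) scale A k l r \<longleftrightarrow>
   partition_regular (loc_carrier scale S) (loc_zero scale S) (loc_add scale S) (loc_scale scale S) A k l r"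
proof (rule pr_transfer[where \<phi> = "\<lambda>m. loc_class scale S m 1" and S = S])
  show "mult_subset S" by (rule mS)
  show "loc_class scale S (a + b) 1 = loc_add scale S (loc_class scale S a 1) (loc_class scale S b 1)" for a b
    using add_cls[OF S1 S1] by simp
  show "loc_class scale S (scale a x) 1 = loc_scale scale S a (loc_class scale S x 1)" for a x
    using scale_cls[OF S1] by simp
  show "loc_class scale S 0 1 = loc_zero scale S" unfolding loc_zero_def ..
  show "loc_add scale S a b \<in> loc_carrier scale S" if "a \<in> loc_carrier scale S" "b \<in> loc_carrier scale S" for a b
  proof -
    obtain m1 s1 m2 s2 where "s1 \<in> S" "a = loc_class scale S m1 s1" "s2 \<in> S" "b = loc_class scale S m2 s2"
      using carrier_E[OF \<open>a \<in> loc_carrier scale S\<close>] carrier_E[OF \<open>b \<in> loc_carrier scale S\<close>] by blast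
    then show ?thesis using add_cls carrier_I Sm by simp
  qed
  show "loc_scale scale S a x \<in> loc_carrier scale S" if "x \<in> loc_carrier scale S" for a x
  proof -
    obtain m1 s1 where "s1 \<in> S" "x = loc_class scale S m1 s1" using carrier_E[OF \<open>x \<in> loc_carrier scale S\<close>] by blast
    then show ?thesis using scale_cls carrier_I by simp
  qed
  show "loc_zero scale S \<in> loc_carrier scale S" unfolding loc_zero_def using carrier_I S1 by auto
  show "loc_class scale S m 1 \<in> loc_carrier scale S" for m using carrier_I S1 by auto
  show "loc_class scale S m 1 = loc_zero scale S \<longleftrightarrow> m = 0" for m
    unfolding loc_zero_def using cls_eq[OF S1 S1] by simp
  show "\<exists>s0\<in>S. \<forall>t\<in>S. loc_scale scale S (s0 * t) x \<in> range (\<lambda>m. loc_class scale S m 1)"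
    if "x \<in> loc_carrier scale S" for x
  proof -
    obtain m s0 where x: "s0 \<in> S" "x = loc_class scale S m s0" using carrier_E[OF \<open>x \<in> loc_carrier scale S\<close>] by auto
    have "loc_scale scale S (s0 * t) x = loc_class scale S (scale t m) 1" if "t \<in> S" for t
    proof -
      have "loc_scale scale S (s0 * t) x = loc_class scale S (scale (s0 * t) m) s0" using x scale_cls by simp
      also have "\<dots> = loc_class scale S (scale t m) 1" using cls_eq[OF x(1) S1] by simp
      finally show ?thesis .
    qed
    then show ?thesis using x by auto
  qed
  show "loc_scale scale S s (loc_add scale S a b) = loc_add scale S (loc_scale scale S s a) (loc_scale scale S s b)"
    if "s \<in> S" "a \<in> loc_carrier scale S" "b \<in> loc_carrier scale S" for s a b
  proof -
    obtain m1 s1 m2 s2 where a: "s1 \<in> S" "a = loc_class scale S m1 s1" and b: "s2 \<in> S" "b = loc_class scale S m2 s2"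
      using carrier_E[OF \<open>a \<in> loc_carrier scale S\<close>] carrier_E[OF \<open>b \<in> loc_carrier scale S\<close>] by blast
    show ?thesis using a b Sm[OF a(1) b(1)]
      by (simp add: add_cls scale_cls scale_right_distrib comm mult.commute)
  qed
  show "loc_scale scale S s (loc_scale scale S a x) = loc_scale scale S a (loc_scale scale S s x)"
    if "s \<in> S" "x \<in> loc_carrier scale S" for s a x
  proof -
    obtain m1 s1 where a: "s1 \<in> S" "x = loc_class scale S m1 s1" using carrier_E[OF \<open>x \<in> loc_carrier scale S\<close>] by blast
    show ?thesis using a by (simp add: scale_cls mult.commute)
  qed
  show "loc_scale scale S s (loc_zero scale S) = loc_zero scale S" if "s \<in> S" for s
    unfolding loc_zero_def using scale_cls[OF S1] by simp
  show "x = loc_zero scale S"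
    if "s \<in> S" "x \<in> loc_carrier scale S" "loc_scale scale S s x = loc_zero scale S" for s x
  proof -
    obtain m1 s1 where a: "s1 \<in> S" "x = loc_class scale S m1 s1" using carrier_E[OF \<open>x \<in> loc_carrier scale S\<close>] by blast
    then have "loc_class scale S (scale s m1) s1 = loc_class scale S 0 1"
      using that scale_cls unfolding loc_zero_def by simp
    then have "scale s m1 = 0" using cls_eq[OF a(1) S1] by simp
    then have "m1 = 0" using nzd that by auto
    then show ?thesis unfolding loc_zero_def using a cls_eq[OF a(1) S1] by simp
  qed
qed

end

lemma fract_main:
  fixes A :: "nat \<Rightarrow> nat \<Rightarrow> 'd::idom"
  shows "partition_regular (UNIV :: 'd set) 0 (+) (*) A k l r \<longleftrightarrow>
             partition_regular (UNIV :: 'd fract set) 0 (+) (\<lambda>a q. Fract a 1 * q) A k l r"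
proof (rule pr_transfer[where \<phi> = "\<lambda>a. Fract a 1" and S = "{s. s \<noteq> 0}"])
  show "mult_subset {s::'d. s \<noteq> 0}" unfolding mult_subset_def by auto
  show "Fract (a + b) 1 = Fract a 1 + Fract b 1" for a b :: 'd by simp
  show "Fract (a * b) 1 = Fract a 1 * Fract b 1" for a b :: 'd by simp
  show "Fract (0::'d) 1 = 0" by (simp add: Zero_fract_def)
  show "Fract m 1 = 0 \<longleftrightarrow> m = 0" for m :: 'd by (simp add: Zero_fract_def eq_fract)
  show "\<exists>s0\<in>{s. s \<noteq> 0}. \<forall>t\<in>{s. s \<noteq> 0}. Fract (s0 * t) 1 * x \<in> range (\<lambda>a. Fract a 1)" for x :: "'d fract"
  proof -
    obtain a b where x: "x = Fract a b" "b \<noteq> 0" by (cases x) auto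
    have "Fract (b * t) 1 * x = Fract (t * a) 1" for t
      using x by (simp add: eq_fract)
    then show ?thesis using x by auto
  qed
  show "Fract s 1 * (a + b) = Fract s 1 * a + Fract s 1 * b" for s a b by (simp add: distrib_left)
  show "Fract s 1 * (Fract a 1 * x) = Fract a 1 * (Fract s 1 * x)" for s a x by (simp add: ac_simps)
  show "Fract s 1 * 0 = 0" for s by simp
  show "x = 0" if "s \<in> {s. s \<noteq> 0}" "Fract s 1 * x = 0" for s x
  proof -
    have "Fract s 1 \<noteq> 0" using that(1) by (simp add: Zero_fract_def eq_fract)
    then show ?thesis using that(2) by simp
  qed
qed auto

theorem proposition1p5:
  shows "(\<forall>(scale :: 'r::comm_ring_1 \<Rightarrow> 'm::ab_group_add \<Rightarrow> 'm) (S :: 'r set)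
            (A :: nat \<Rightarrow> nat \<Rightarrow> 'r) (k :: nat) (l :: nat) (r :: nat).
            module scale \<and> mult_subset S \<and> (\<forall>s\<in>S. \<forall>m. scale s m = 0 \<longrightarrow> m = 0) \<and> r \<ge> 1
            \<longrightarrow> (partition_regular UNIV 0 (+) scale A k l r \<longleftrightarrow>
                 partition_regular (loc_carrier scale S) (loc_zero scale S) (loc_add scale S)
                   (loc_scale scale S) A k l r))
       \<and> (\<forall>(A :: nat \<Rightarrow> nat \<Rightarrow> 'd::idom) (k :: nat) (l :: nat) (r :: nat).
            r \<ge> 1 \<longrightarrow>
            (partition_regular (UNIV :: 'd set) 0 (+) (*) A k l r \<longleftrightarrow>
             partition_regular (UNIV :: 'd fract set) 0 (+) (\<lambda>a q. Fract a 1 * q) A k l r))"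
proof (intro conjI allI impI)
  fix scale :: "'r::comm_ring_1 \<Rightarrow> 'm::ab_group_add \<Rightarrow> 'm" and S :: "'r set" and A :: "nat \<Rightarrow> nat \<Rightarrow> 'r"
    and k l r :: nat
  assume h: "module scale \<and> mult_subset S \<and> (\<forall>s\<in>S. \<forall>m. scale s m = 0 \<longrightarrow> m = 0) \<and> r \<ge> 1"
  interpret locm scale S
    using h unfolding locm_def locm_axioms_def by auto
  show "partition_regular UNIV 0 (+) scale A k l r \<longleftrightarrow>
                 partition_regular (loc_carrier scale S) (loc_zero scale S) (loc_add scale S)
                   (loc_scale scale S) A k l r" by (rule main)
next
  fix A :: "nat \<Rightarrow> nat \<Rightarrow> 'd::idom" and k l r :: nat
  show "partition_regular (UNIV :: 'd set) 0 (+) (*) A k l r \<longleftrightarrow>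
             partition_regular (UNIV :: 'd fract set) 0 (+) (\<lambda>a q. Fract a 1 * q) A k l r"
    by (rule fract_main)
qed

end
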